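(* Let $q\in\mathbb{C}^*$ with $|q|>1$. For all integers $n\geq0$, $$\frac{n+1}{(q;q)_{n+1}}=-\sum_{k=0}^{n}\frac{1}{(q^{k+1}-1)(q;q)_{n-k}}.$$
   Context: $(q;q)_0=1$ and $(q;q)_n=\prod_{k=1}^n(1-q^k)$ for $n\geq1$. *)

theory Defs
  imports Complex_Main
begin

definition qpoch :: "complex \<Rightarrow> nat \<Rightarrow> complex" where
  "qpoch q n = (\<Prod>k=1..n. 1 - q ^ k)"

end

theory Submission
  imports Defs
begin

lemma qp_Suc: "qpoch q (Suc n) = qpoch q n * (1 - q ^ Suc n)"
  unfolding qpoch_def by (simp add: prod.nat_ivl_Suc')

lemma nz: fixes q :: complex assumes "norm q > 1" "k \<ge> 1" shows "1 - q ^ k \<noteq> 0"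
proof
  assume "1 - q ^ k = 0"
  hence "norm (q ^ k) = 1" by (metis norm_one right_minus_eq)
  moreover have "norm (q ^ k) > 1" using assms
    by (simp add: norm_power one_less_power)
  ultimately show False by simp
qed

lemma qp_nz: fixes q :: complex assumes "norm q > 1" shows "qpoch q n \<noteq> 0"
  using nz[OF assms] unfolding qpoch_def by (simp add: prod_zero_iff)

lemma telescope: fixes q :: complex assumes "norm q > 1"
  shows "(\<Sum>j=0..n. q ^ j / qpoch q j) = 1 / qpoch q n"
proof (induction n)
  case 0 then show ?case by (simp add: qpoch_def)
next
  case (Suc n)
  have a: "1 - q ^ Suc n \<noteq> 0" by (rule nz[OF assms]) simp
  have b: "qpoch q n \<noteq> 0" using qp_nz[OF assms] .
  have "(\<Sum>j=0..Suc n. q ^ j / qpoch q j) = 1 / qpoch q n + q ^ Suc n / qpoch q (Suc n)"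
    using Suc by simp
  also have "\<dots> = 1 / qpoch q (Suc n)" using a b
    by (simp add: qp_Suc field_simps)
  finally show ?case .
qed

definition S :: "complex \<Rightarrow> nat \<Rightarrow> complex" where
  "S q n = (\<Sum>k=0..n. 1 / ((1 - q ^ (k+1)) * qpoch q (n - k)))"

lemma key: fixes q :: complex assumes "norm q > 1"
  shows "(1 - q ^ (n+2)) * S q (Suc n) = 1 / qpoch q (Suc n) + S q n"
proof -
  have gen: "\<And>B P a::complex. a \<noteq> 0 \<Longrightarrow> a / (B * (P * a)) = 1 / (B * P)" by simp
  have split: "(1 - q ^ (n+2)) * (1 / ((1 - q ^ (k+1)) * qpoch q (Suc n - k)))
     = (1 - q ^ (Suc n - k)) / ((1 - q ^ (k+1)) * qpoch q (Suc n - k))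
       + q ^ (Suc n - k) / qpoch q (Suc n - k)" if "k \<le> Suc n" for k
  proof -
    have a: "1 - q ^ (k+1) \<noteq> 0" by (rule nz[OF assms]) simp
    have b: "qpoch q (Suc n - k) \<noteq> 0" using qp_nz[OF assms] .
    have e: "q ^ (n+2) = q ^ (Suc n - k) * q ^ (k+1)" using that
      by (simp add: power_add[symmetric])
    show ?thesis using a b unfolding e by (simp add: field_simps)
  qed
  have "(1 - q ^ (n+2)) * S q (Suc n) =
     (\<Sum>k=0..Suc n. (1 - q ^ (Suc n - k)) / ((1 - q ^ (k+1)) * qpoch q (Suc n - k)))
     + (\<Sum>k=0..Suc n. q ^ (Suc n - k) / qpoch q (Suc n - k))"
    unfolding S_def sum_distrib_left sum.distrib[symmetric]
    by (rule sum.cong[OF refl], rule split) simp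
  also have "(\<Sum>k=0..Suc n. q ^ (Suc n - k) / qpoch q (Suc n - k))
      = (\<Sum>j=0..Suc n. q ^ j / qpoch q j)"
    by (subst sum.atLeastAtMost_rev) simp
  also have "\<dots> = 1 / qpoch q (Suc n)" by (rule telescope[OF assms])
  also have "(\<Sum>k=0..Suc n. (1 - q ^ (Suc n - k)) / ((1 - q ^ (k+1)) * qpoch q (Suc n - k)))
      = (\<Sum>k=0..n. (1 - q ^ (Suc n - k)) / ((1 - q ^ (k+1)) * qpoch q (Suc n - k)))"
    by simp
  also have "\<dots> = S q n" unfolding S_def
  proof (rule sum.cong)
    fix k assume "k \<in> {0..n}"
    hence e: "Suc n - k = Suc (n - k)" by auto
    have b: "1 - q ^ Suc (n - k) \<noteq> 0" by (rule nz[OF assms]) simp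
    show "(1 - q ^ (Suc n - k)) / ((1 - q ^ (k+1)) * qpoch q (Suc n - k))
        = 1 / ((1 - q ^ (k+1)) * qpoch q (n - k))"
      unfolding e qp_Suc by (rule gen[OF b])
  qed simp
  finally show ?thesis by simp
qed

lemma main: fixes q :: complex assumes "norm q > 1"
  shows "S q n = of_nat (n+1) / qpoch q (n+1)"
proof (induction n)
  case 0
  have "1 - q \<noteq> 0" using nz[OF assms, of 1] by simp
  then show ?case by (simp add: S_def qpoch_def)
next
  case (Suc n)
  have a: "1 - q ^ (n+2) \<noteq> 0" by (rule nz[OF assms]) simp
  have b: "qpoch q (Suc n) \<noteq> 0" using qp_nz[OF assms] .
  have "(1 - q ^ (n+2)) * S q (Suc n) = 1 / qpoch q (Suc n) + of_nat (n+1) / qpoch q (n+1)"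
    using key[OF assms, of n] Suc by simp
  hence "S q (Suc n) = (of_nat (n+2) / qpoch q (Suc n)) / (1 - q ^ (n+2))"
    using a b by (simp add: field_simps)
  also have "\<dots> = of_nat (Suc n + 1) / qpoch q (Suc n + 1)"
    using qp_Suc[of q "Suc n"] by (simp add: field_simps)
  finally show ?case .
qed

theorem lemma2p8:
  fixes q :: complex and n :: nat
  assumes "q \<noteq> 0" and "norm q > 1"
  shows "of_nat (n + 1) / qpoch q (n + 1)
           = - (\<Sum>k=0..n. 1 / ((q ^ (k + 1) - 1) * qpoch q (n - k)))"
proof -
  have "- (\<Sum>k=0..n. 1 / ((q ^ (k + 1) - 1) * qpoch q (n - k))) = S q n"
    unfolding S_def sum_negf[symmetric]
  proof (rule sum.cong[OF refl])
    fix k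
    have e: "q ^ (k + 1) - 1 = - (1 - q ^ (k + 1))" by simp
    show "- (1 / ((q ^ (k + 1) - 1) * qpoch q (n - k))) = 1 / ((1 - q ^ (k + 1)) * qpoch q (n - k))"
      unfolding e by (simp only: mult_minus_left divide_minus_right minus_minus)
  qed
  then show ?thesis using main[OF assms(2)] by simp
qed

end
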